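(* For every knot type $[K]$, $2\,\mathrm{br}[K]+1\le \mathrm{pl}[K]$.
   Context: For a conformation $K$ of a knot (an embedded closed curve in $\mathbb{R}^3$ in the knot type) and a direction $p\in S^2$, let $\mathrm{br}(K,p)$ be the number of local maxima of $K$ with respect to the height function in direction $p$, where an extremum occurring along an interval of constant height is counted as a single extremum. The bridge index is $\mathrm{br}[K]=\min_{K\in[K]}\min_{p\in S^2}\mathrm{br}(K,p)$. A planar stick diagram of $[K]$ is a closed polygonal curve in the plane (finitely many straight line segments, called edges, joined end to end), whose self-intersections are transverse double points in the interiors of edges, with over/under crossing information at each self-intersection, representing $[K]$. The planar stick index $\mathrm{pl}[K]$ is the smallest number of edges in any planar stick diagram of $[K]$. *)

theory Defs
  imports "HOL-Analysis.Analysis" "HOL-Library.Extended_Nat"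
begin

definition is_knot :: "(real^3) set \<Rightarrow> bool" where
  "is_knot K \<longleftrightarrow> (\<exists>g. simple_path g \<and> pathfinish g = pathstart g \<and> path_image g = K)"

definition ambient_isotopic :: "(real^3) set \<Rightarrow> (real^3) set \<Rightarrow> bool" where
  "ambient_isotopic A B \<longleftrightarrow>
     (\<exists>H :: real \<times> (real^3) \<Rightarrow> real^3.
        continuous_on ({0..1} \<times> UNIV) H \<and>
        (\<forall>t\<in>{0..1}. \<exists>G. homeomorphism UNIV UNIV (\<lambda>x. H (t, x)) G) \<and>
        (\<forall>x. H (0, x) = x) \<and>
        (\<lambda>x. H (1, x)) ` A = B)"

definition same_knot_type :: "(real^3) set \<Rightarrow> (real^3) set \<Rightarrow> bool" where
  "same_knot_type K K' \<longleftrightarrow> is_knot K' \<and> ambient_isotopic K K'"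

text \<open>Local maxima of the height function x \<mapsto> p \<bullet> x on K; a maximum attained along an
  interval of constant height is counted once: a local maximum is a connected component C of
  a level set of the height on K such that all points of K in some neighbourhood of C are
  no higher than C.\<close>
definition local_max_sets :: "(real^3) set \<Rightarrow> real^3 \<Rightarrow> (real^3) set set" where
  "local_max_sets K p =
     {C. \<exists>c. C \<in> components (K \<inter> {x. p \<bullet> x = c}) \<and>
            (\<exists>U. open U \<and> C \<subseteq> U \<and> (\<forall>x\<in>K \<inter> U. p \<bullet> x \<le> c))}"

definition br :: "(real^3) set \<Rightarrow> real^3 \<Rightarrow> enat" where
  "br K p = (if finite (local_max_sets K p) then enat (card (local_max_sets K p)) else \<infinity>)"

definition bridge_index :: "(real^3) set \<Rightarrow> enat" where
  "bridge_index K = (INF K'\<in>{K'. same_knot_type K K'}. INF p\<in>sphere 0 1. br K' p)"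

text \<open>The closed polygonal curve in the plane with vertex list vs (edge i joins vs!i to
  vs!((i+1) mod n)), parametrised on [0,1] with edge i traversed for t \<in> [i/n,(i+1)/n].\<close>
definition stick_curve :: "(real^2) list \<Rightarrow> real \<Rightarrow> real^2" where
  "stick_curve vs t =
     (let n = length vs; u = t * real n; i = min (nat \<lfloor>u\<rfloor>) (n - 1); s = u - real i
      in (1 - s) *\<^sub>R vs ! i + s *\<^sub>R vs ! ((i + 1) mod n))"

definition edge_vec :: "(real^2) list \<Rightarrow> nat \<Rightarrow> real^2" where
  "edge_vec vs i = vs ! ((i + 1) mod length vs) - vs ! i"

definition stick_edge_index :: "(real^2) list \<Rightarrow> real \<Rightarrow> nat" where
  "stick_edge_index vs t = nat \<lfloor>t * real (length vs)\<rfloor>"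

definition double_pair :: "(real^2) list \<Rightarrow> real \<Rightarrow> real \<Rightarrow> bool" where
  "double_pair vs s t \<longleftrightarrow> s \<in> {0..<1} \<and> t \<in> {0..<1} \<and> s \<noteq> t \<and> stick_curve vs s = stick_curve vs t"

text \<open>A planar stick diagram (without crossing data): a nonempty closed polygon of genuine
  (nondegenerate) edges whose self-intersections are transverse double points lying in the
  interiors of edges.\<close>
definition stick_polygon :: "(real^2) list \<Rightarrow> bool" where
  "stick_polygon vs \<longleftrightarrow> vs \<noteq> [] \<and>
     (\<forall>i<length vs. edge_vec vs i \<noteq> 0) \<and>
     (\<forall>s t. double_pair vs s t \<longrightarrow>
        s * real (length vs) \<notin> \<int> \<and> t * real (length vs) \<notin> \<int> \<and>
        (let d = edge_vec vs (stick_edge_index vs s); e = edge_vec vs (stick_edge_index vs t)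
         in d $ 1 * e $ 2 - d $ 2 * e $ 1 \<noteq> 0) \<and>
        (\<forall>r\<in>{0..<1}. stick_curve vs r = stick_curve vs s \<longrightarrow> r = s \<or> r = t))"

text \<open>Crossing information: at every double point (parameters s, t), over s t says that the
  strand through parameter s is the over-strand; exactly one of the two strands is over.\<close>
definition crossing_info :: "(real^2) list \<Rightarrow> (real \<Rightarrow> real \<Rightarrow> bool) \<Rightarrow> bool" where
  "crossing_info vs over \<longleftrightarrow> (\<forall>s t. double_pair vs s t \<longrightarrow> (over s t \<longleftrightarrow> \<not> over t s))"

text \<open>The diagram (vs, over) represents the knot type of K: it lifts (adding a height
  coordinate, consistent with the crossing information) to a knot in the knot type of K
  whose projection to the plane of the first two coordinates is the diagram.\<close>
definition represents :: "(real^2) list \<Rightarrow> (real \<Rightarrow> real \<Rightarrow> bool) \<Rightarrow> (real^3) set \<Rightarrow> bool" where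
  "represents vs over K \<longleftrightarrow>
     (\<exists>z :: real \<Rightarrow> real.
        continuous_on {0..1} z \<and> z 0 = z 1 \<and>
        (\<forall>s t. double_pair vs s t \<longrightarrow> over s t \<longrightarrow> z s > z t) \<and>
        (let g = (\<lambda>t. vector [stick_curve vs t $ 1, stick_curve vs t $ 2, z t] :: real^3)
         in simple_path g \<and> pathfinish g = pathstart g \<and> same_knot_type K (path_image g)))"

definition planar_stick_index :: "(real^3) set \<Rightarrow> enat" where
  "planar_stick_index K =
     (INF n\<in>{n. \<exists>vs over. length vs = n \<and> stick_polygon vs \<and> crossing_info vs over
                          \<and> represents vs over K}. enat n)"

end

theory Submission
  imports Defs
begin

lemma comp_absorb:
  assumes "C \<in> components S" "connected T" "T \<subseteq> S" "T \<inter> C \<noteq> {}"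
  shows "T \<subseteq> C"
proof -
  have "connected (C \<union> T)"
    using assms by (metis connected_Un in_components_connected inf_commute)
  moreover have "C \<union> T \<subseteq> S" using assms in_components_subset by blast
  ultimately have "C \<union> T = C" using assms(1) unfolding in_components_maximal
    by (metis Un_empty Un_upper1)
  then show ?thesis by blast
qed

locale pl =
  fixes g :: "real \<Rightarrow> real^3" and p :: "real^3" and H :: "nat \<Rightarrow> real" and n :: nat
  assumes n3: "n \<ge> 3"
  and cont: "continuous_on {0..1} g" and loop: "g 1 = g 0"
  and hgt: "\<And>k s. k < n \<Longrightarrow> 0 \<le> s \<Longrightarrow> s \<le> 1 \<Longrightarrow>
      p \<bullet> g ((real k + s) / real n) = (1 - s) * H k + s * H ((k+1) mod n)"
  and flat0: "H (1 mod n) = H 0"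
begin

definition P :: "nat \<Rightarrow> real^3" where "P k = g (real k / real n)"
definition KK :: "(real^3) set" where "KK = g ` {0..1}"
definition flat :: "nat \<Rightarrow> bool" where "flat k \<longleftrightarrow> H ((k+1) mod n) = H k"
definition up :: "nat \<Rightarrow> bool" where "up k \<longleftrightarrow> H k < H ((k+1) mod n)"
definition down :: "nat \<Rightarrow> bool" where "down k \<longleftrightarrow> H ((k+1) mod n) < H k"

definition ismax :: "(real^3) set \<Rightarrow> real \<Rightarrow> (real^3) set \<Rightarrow> bool" where
  "ismax C c U \<longleftrightarrow> C \<in> components (KK \<inter> {x. p \<bullet> x = c}) \<and> open U \<and> C \<subseteq> U \<and>
     (\<forall>x\<in>KK \<inter> U. p \<bullet> x \<le> c)"

lemma npos: "real n > 0" using n3 by simp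

lemma param: "k < n \<Longrightarrow> 0 \<le> s \<Longrightarrow> s \<le> 1 \<Longrightarrow> (real k + s) / real n \<in> {0..1}"
proof -
  assume a: "k < n" "0 \<le> s" "s \<le> 1"
  have "real k + s \<le> real n" using a by (simp add: of_nat_less_iff[symmetric])
  then show ?thesis using a npos by (simp add: field_simps)
qed

lemma Psucc: "k < n \<Longrightarrow> g ((real k + 1) / real n) = P ((k+1) mod n)"
proof (cases "k + 1 < n")
  case True then show ?thesis by (simp add: P_def add.commute)
next
  case False
  assume "k < n"
  then have "k + 1 = n" using False by simp
  then have "(real k + 1) / real n = 1" using npos by (simp add: field_simps)
  moreover have "P ((k+1) mod n) = g 0" using \<open>k+1 = n\<close> by (simp add: P_def)
  ultimately show ?thesis using loop by simp
qed

lemma hP: "k < n \<Longrightarrow> p \<bullet> P k = H k"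
  using hgt[of k 0] by (simp add: P_def)

lemma P_in: "k < n \<Longrightarrow> P k \<in> KK"
  using param[of k 0] unfolding P_def KK_def by auto

lemma near:
  assumes "t \<in> {0..1}" "g t \<in> U" "open U"
  shows "\<exists>d>0. \<forall>t'\<in>{0..1}. \<bar>t' - t\<bar> < d \<longrightarrow> g t' \<in> U"
proof -
  obtain e where e: "e > 0" "ball (g t) e \<subseteq> U" using assms open_contains_ball by blast
  obtain d where d: "d > 0" "\<forall>t'\<in>{0..1}. dist t' t < d \<longrightarrow> dist (g t') (g t) < e"
    using cont assms(1) e(1) unfolding continuous_on_iff by blast
  show ?thesis
    using d e by (metis dist_commute dist_real_def mem_ball subsetD)
qed

lemma ismax_level: "ismax C c U \<Longrightarrow> x \<in> C \<Longrightarrow> x \<in> KK \<and> p \<bullet> x = c"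
  unfolding ismax_def using in_components_subset by blast

lemma bump:
  assumes im: "ismax C c U" and k: "k < n" and s: "0 \<le> s" "s \<le> 1"
    and inC: "g ((real k + s) / real n) \<in> C"
    and cs: "(s < 1 \<and> H k < H ((k+1) mod n)) \<or> (0 < s \<and> H ((k+1) mod n) < H k)"
  shows False
proof -
  define t where "t = (real k + s) / real n"
  have t01: "t \<in> {0..1}" using param[OF k s] t_def by simp
  have U: "open U" "g t \<in> U" using im inC unfolding ismax_def t_def by auto
  have c: "c = (1 - s) * H k + s * H ((k+1) mod n)"
    using ismax_level[OF im inC] hgt[OF k s] by simp
  obtain d where d: "d > 0" "\<forall>t'\<in>{0..1}. \<bar>t' - t\<bar> < d \<longrightarrow> g t' \<in> U"
    using near[OF t01 U(2,1)] by blast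
  have key: "\<exists>s'. 0 \<le> s' \<and> s' \<le> 1 \<and> \<bar>s' - s\<bar> < d * real n \<and> (s' - s) * (H ((k+1) mod n) - H k) > 0"
  proof (cases "s < 1 \<and> H k < H ((k+1) mod n)")
    case True
    define e where "e = min ((1 - s)/2) (d * real n / 2)"
    have dn: "d * real n > 0" using d npos by simp
    have e: "e > 0" "e \<le> (1-s)/2" "e < d * real n" using True dn unfolding e_def by (auto simp: min_def)
    show ?thesis using True e s by (intro exI[of _ "s + e"]) auto
  next
    case False
    then have F: "0 < s \<and> H ((k+1) mod n) < H k" using cs by blast
    define e where "e = min (s/2) (d * real n / 2)"
    have dn: "d * real n > 0" using d npos by simp
    have e: "e > 0" "e \<le> s/2" "e < d * real n" using F dn unfolding e_def by (auto simp: min_def)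
    have "(- e) * (H ((k+1) mod n) - H k) > 0" using F e mult_pos_neg[of e "H ((k+1) mod n) - H k"] by simp
    then show ?thesis using e s by (intro exI[of _ "s - e"]) auto
  qed
  then obtain s' where s': "0 \<le> s'" "s' \<le> 1" "\<bar>s' - s\<bar> < d * real n"
    "(s' - s) * (H ((k+1) mod n) - H k) > 0" by blast
  define t' where "t' = (real k + s') / real n"
  have t'01: "t' \<in> {0..1}" using param[OF k s'(1,2)] t'_def by simp
  have "t' - t = (s' - s) / real n" unfolding t_def t'_def using npos by (simp add: field_simps)
  then have "\<bar>t' - t\<bar> = \<bar>s' - s\<bar> / real n" using npos by simp
  then have "\<bar>t' - t\<bar> < d" using s'(3) npos by (simp add: divide_less_eq)
  then have "g t' \<in> U" using d t'01 by blast
  moreover have "g t' \<in> KK" using t'01 unfolding KK_def by blast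
  ultimately have "p \<bullet> g t' \<le> c" using im unfolding ismax_def by blast
  moreover have "p \<bullet> g t' = (1 - s') * H k + s' * H ((k+1) mod n)"
    using hgt[OF k s'(1,2)] t'_def by simp
  ultimately show False using c s'(4) by (simp add: algebra_simps)
qed

lemma seg:
  assumes k: "k < n"
  defines "T \<equiv> g ` {real k / real n .. (real k + 1) / real n}"
  shows "connected T" "T \<subseteq> KK" "P k \<in> T" "P ((k+1) mod n) \<in> T"
    "flat k \<Longrightarrow> T \<subseteq> {x. p \<bullet> x = H k}"
    "\<And>s. 0 \<le> s \<Longrightarrow> s \<le> 1 \<Longrightarrow> g ((real k + s) / real n) \<in> T"
proof -
  have sub: "{real k / real n .. (real k + 1) / real n} \<subseteq> {0..1}"
    using param[OF k, of 0] param[OF k, of 1] by auto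
  show "connected T" unfolding T_def
    by (rule connected_continuous_image) (use continuous_on_subset[OF cont sub] in auto)
  show "T \<subseteq> KK" unfolding T_def KK_def using sub by blast
  show "P k \<in> T" unfolding T_def P_def using npos by (auto simp: field_simps)
  show "P ((k+1) mod n) \<in> T" unfolding T_def using Psucc[OF k] npos
    by (metis atLeastAtMost_iff divide_right_mono image_eqI less_eq_real_def
        less_add_one npos of_nat_0_le_iff order_refl)
  show "\<And>s. 0 \<le> s \<Longrightarrow> s \<le> 1 \<Longrightarrow> g ((real k + s) / real n) \<in> T"
    unfolding T_def using npos by (auto simp: field_simps)
  assume fl: "flat k"
  show "T \<subseteq> {x. p \<bullet> x = H k}"
  proof
    fix x assume "x \<in> T"
    then obtain t where t: "t \<in> {real k / real n .. (real k + 1) / real n}" "x = g t"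
      unfolding T_def by blast
    define s where "s = t * real n - real k"
    have s: "0 \<le> s" "s \<le> 1" using t npos unfolding s_def by (auto simp: field_simps)
    have "t = (real k + s) / real n" unfolding s_def using npos by simp
    then have "p \<bullet> x = (1 - s) * H k + s * H ((k+1) mod n)" using hgt[OF k s] t by simp
    then show "x \<in> {x. p \<bullet> x = H k}" using fl unfolding flat_def by (simp add: algebra_simps)
  qed
qed

lemma flat_step:
  assumes im: "ismax C c U" and k: "k < n" and fl: "flat k"
  shows "P k \<in> C \<longleftrightarrow> P ((k+1) mod n) \<in> C"
proof -
  define T where "T = g ` {real k / real n .. (real k + 1) / real n}"
  note sg = seg[OF k, folded T_def]
  have comp: "C \<in> components (KK \<inter> {x. p \<bullet> x = c})" using im ismax_def by blast
  have hk1: "H ((k+1) mod n) = H k" using fl flat_def by simp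
  show ?thesis
  proof
    assume a: "P k \<in> C"
    then have "c = H k" using ismax_level[OF im a] hP[OF k] by simp
    then have "T \<subseteq> C" using comp_absorb[OF comp sg(1)] sg(2) sg(3) sg(5)[OF fl] a by blast
    then show "P ((k+1) mod n) \<in> C" using sg(4) by blast
  next
    assume a: "P ((k+1) mod n) \<in> C"
    then have "c = H k" using ismax_level[OF im a] hP[of "(k+1) mod n"] hk1 npos by simp
    then have "T \<subseteq> C" using comp_absorb[OF comp sg(1)] sg(2) sg(4) sg(5)[OF fl] a by blast
    then show "P k \<in> C" using sg(3) by blast
  qed
qed

lemma vertex_in:
  assumes im: "ismax C c U"
  shows "\<exists>j<n. P j \<in> C"
proof -
  have comp: "C \<in> components (KK \<inter> {x. p \<bullet> x = c})" using im ismax_def by blast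
  obtain x where x: "x \<in> C" using comp in_components_nonempty by blast
  then obtain t where t: "t \<in> {0..1}" "x = g t" using ismax_level[OF im x] KK_def by auto
  show ?thesis
  proof (cases "t = 1")
    case True
    then have "x = P 0" using t loop by (simp add: P_def)
    then show ?thesis using x n3 by (intro exI[of _ 0]) simp
  next
    case False
    define k where "k = nat \<lfloor>t * real n\<rfloor>"
    define s where "s = t * real n - real k"
    have tn: "0 \<le> t * real n" "t * real n < real n" using t False npos by auto
    have kk: "real k = of_int \<lfloor>t * real n\<rfloor>" unfolding k_def using tn by simp
    have s: "0 \<le> s" "s < 1" unfolding s_def kk by linarith+
    have k: "k < n" using tn kk by linarith
    have tt: "t = (real k + s) / real n" unfolding s_def using npos by simp
    show ?thesis
    proof (cases "s = 0")
      case True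
      then have "x = P k" using t tt by (simp add: P_def)
      then show ?thesis using x k by blast
    next
      case False
      then have s0: "0 < s" using s by simp
      have xin: "g ((real k + s) / real n) \<in> C" using x t tt by simp
      show ?thesis
      proof (cases "flat k")
        case True
        define T where "T = g ` {real k / real n .. (real k + 1) / real n}"
        note sg = seg[OF k, folded T_def]
        have "c = H k" using ismax_level[OF im x] t tt hgt[OF k s(1)] s True
          unfolding flat_def by (simp add: algebra_simps)
        have "g ((real k + s) / real n) \<in> T" using sg(6) s by simp
        then have "T \<subseteq> C" using comp_absorb[OF comp sg(1)] sg(2) sg(5)[OF True] xin \<open>c = H k\<close>
          by blast
        then show ?thesis using sg(3) k by blast
      next
        case False
        then have "(s < 1 \<and> H k < H ((k+1) mod n)) \<or> (0 < s \<and> H ((k+1) mod n) < H k)"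
          using s s0 unfolding flat_def by auto
        then show ?thesis using bump[OF im k s(1) _ xin] s by auto
      qed
    qed
  qed
qed

definition Dp :: "nat \<Rightarrow> bool" where
  "Dp i \<longleftrightarrow> (\<exists>a d. a < n \<and> up a \<and> 0 < d \<and> i = (a + d) mod n \<and>
          (\<forall>e. 0 < e \<longrightarrow> e < d \<longrightarrow> flat ((a + e) mod n)))"

definition D :: "nat set" where
  "D = {i. i < n \<and> down i \<and> Dp i}"

lemma D_props: "i \<in> D \<Longrightarrow> i < n" "i \<in> D \<Longrightarrow> down i" "i \<in> D \<Longrightarrow> Dp i"
  unfolding D_def by simp_all

lemma count: "2 * card D + 1 \<le> n"
proof -
  define Q where "Q = (\<lambda>i a. a < n \<and> up a \<and> (\<exists>d. 0 < d \<and> i = (a + d) mod n \<and>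
          (\<forall>e. 0 < e \<longrightarrow> e < d \<longrightarrow> flat ((a + e) mod n))))"
  have "\<forall>i\<in>D. \<exists>a. Q i a" using D_props(3) unfolding Dp_def Q_def by blast
  then have "\<exists>al. \<forall>i\<in>D. Q i (al i)" by (rule bchoice)
  then obtain al where al0: "\<forall>i\<in>D. Q i (al i)" by blast
  have al: "al i < n \<and> up (al i) \<and> (\<exists>d. 0 < d \<and> i = (al i + d) mod n \<and>
          (\<forall>e. 0 < e \<longrightarrow> e < d \<longrightarrow> flat ((al i + e) mod n)))" if "i \<in> D" for i
    using al0 that unfolding Q_def by blast
  have al_lt: "al i < n" if "i \<in> D" for i using al[OF that] by (rule conjunct1)
  have al_up: "up (al i)" if "i \<in> D" for i using al[OF that] by (rule conjunct2[THEN conjunct1])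
  have inj: "inj_on al D"
  proof (rule inj_onI)
    fix i1 i2 assume i: "i1 \<in> D" "i2 \<in> D" "al i1 = al i2"
    obtain d1 where d1: "0 < d1" "i1 = (al i1 + d1) mod n" "\<forall>e. 0 < e \<longrightarrow> e < d1 \<longrightarrow> flat ((al i1 + e) mod n)"
      using al[OF i(1)] by blast
    obtain d2 where d2': "0 < d2" "i2 = (al i2 + d2) mod n" "\<forall>e. 0 < e \<longrightarrow> e < d2 \<longrightarrow> flat ((al i2 + e) mod n)"
      using al[OF i(2)] by blast
    have d2: "0 < d2" "i2 = (al i1 + d2) mod n" "\<forall>e. 0 < e \<longrightarrow> e < d2 \<longrightarrow> flat ((al i1 + e) mod n)"
      unfolding i(3) using d2' by blast+
    have dn1: "down i1" "down i2" using i(1,2) D_props(2) by blast+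
    have "\<not> d1 < d2"
    proof
      assume "d1 < d2" then have "flat ((al i1 + d1) mod n)" using d2(3) d1(1) by blast
      then have "flat i1" by (simp only: d1(2)[symmetric])
      then show False using dn1 unfolding flat_def down_def by simp
    qed
    moreover have "\<not> d2 < d1"
    proof
      assume "d2 < d1" then have "flat ((al i1 + d2) mod n)" using d1(3) d2(1) by blast
      then have "flat i2" by (simp only: d2(2)[symmetric])
      then show False using dn1 unfolding flat_def down_def by simp
    qed
    ultimately have "d1 = d2" by simp
    then show "i1 = i2" using d1(2) d2(2) by simp
  qed
  have Dsub: "D \<subseteq> {..<n}" using D_props(1) by blast
  have fD: "finite D" using Dsub finite_subset by blast
  have alsub: "al ` D \<subseteq> {..<n}" using al_lt by blast
  have dis1: "D \<inter> al ` D = {}"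
  proof (rule ccontr)
    assume "D \<inter> al ` D \<noteq> {}"
    then obtain x i' where x: "x \<in> D" "i' \<in> D" "x = al i'" by blast
    then have "up x" using al_up by blast
    moreover have "down x" using x(1) D_props(2) by blast
    ultimately show False unfolding up_def down_def by simp
  qed
  have dis2: "0 \<notin> D"
  proof
    assume "0 \<in> D" then have "down 0" by (rule D_props(2))
    then show False using flat0 unfolding down_def by (metis add_0 order_less_irrefl)
  qed
  have dis3: "0 \<notin> al ` D"
  proof
    assume "0 \<in> al ` D" then obtain i where i: "i \<in> D" "0 = al i" by blast
    have "up 0" using al_up[OF i(1)] unfolding i(2)[symmetric] .
    then show False using flat0 unfolding up_def by (metis add_0 order_less_irrefl)
  qed
  have fA: "finite (al ` D)" using fD by simp
  have c1: "card (D \<union> al ` D) = card D + card D"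
    using card_Un_disjoint[OF fD fA dis1] card_image[OF inj] by simp
  have "0 \<notin> D \<union> al ` D" using dis2 dis3 by blast
  then have "card (insert 0 (D \<union> al ` D)) = card (D \<union> al ` D) + 1"
    using fD fA by simp
  then have "card (insert 0 (D \<union> al ` D)) = card D + card D + 1" using c1 by simp
  moreover have "insert 0 (D \<union> al ` D) \<subseteq> {..<n}" using Dsub alsub n3 by auto
  then have "card (insert 0 (D \<union> al ` D)) \<le> card {..<n}" by (rule card_mono[OF finite_lessThan])
  then have "card (insert 0 (D \<union> al ` D)) \<le> n" by simp
  ultimately show ?thesis by simp
qed

lemma modlem: "j < n \<Longrightarrow> m < n \<Longrightarrow> (j + (m + n - j) mod n) mod n = m"
proof -
  assume a: "j < n" "m < n"
  have "(j + (m + n - j) mod n) mod n = (j + (m + n - j)) mod n" by (simp add: mod_add_right_eq)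
  also have "j + (m + n - j) = m + n" using a by simp
  finally show ?thesis using a by simp
qed

lemma walk:
  assumes im: "ismax C c U" and j: "j < n" "P j \<in> C" and nf: "\<exists>m<n. \<not> flat m"
  shows "\<exists>i\<in>D. P i \<in> C"
proof -
  obtain m where m: "m < n" "\<not> flat m" using nf by blast
  define f1 where "f1 = (m + n - j) mod n"
  have f1: "f1 < n" "(j + f1) mod n = m" using modlem[OF j(1) m(1)] npos f1_def by auto
  have exf: "\<exists>f. \<not> flat ((j + f) mod n)" using f1 m by metis
  define f0 where "f0 = (LEAST f. \<not> flat ((j + f) mod n))"
  have f0: "\<not> flat ((j + f0) mod n)" "\<And>e. e < f0 \<Longrightarrow> flat ((j + e) mod n)"
    unfolding f0_def using LeastI_ex[OF exf] not_less_Least by auto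
  have fwd: "e \<le> f0 \<Longrightarrow> P ((j + e) mod n) \<in> C" for e
  proof (induction e)
    case 0 then show ?case using j by simp
  next
    case (Suc e)
    then have "P ((j + e) mod n) \<in> C" by simp
    moreover have "flat ((j + e) mod n)" using f0(2) Suc by simp
    ultimately have "P (((j + e) mod n + 1) mod n) \<in> C"
      using flat_step[OF im] npos by (meson mod_less_divisor of_nat_0_less_iff)
    then show ?case by (simp add: mod_Suc_eq)
  qed
  define i where "i = (j + f0) mod n"
  have iC: "P i \<in> C" using fwd[of f0] i_def by simp
  have ilt: "i < n" using i_def npos by simp
  have "\<not> up i"
  proof
    assume "up i"
    have "g ((real i + 0) / real n) \<in> C" using iC by (simp add: P_def)
    then show False using bump[OF im ilt, of 0] \<open>up i\<close> unfolding up_def by simp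
  qed
  then have di: "down i" using f0(1) i_def unfolding flat_def up_def down_def by auto
  have exb: "\<exists>b. 1 \<le> b \<and> b \<le> n \<and> \<not> flat ((j + n - b) mod n)"
  proof (intro exI[of _ "n - f1"] conjI)
    show "1 \<le> n - f1" "n - f1 \<le> n" using f1 by auto
    have "j + n - (n - f1) = j + f1" using f1 by simp
    then show "\<not> flat ((j + n - (n - f1)) mod n)" using f1 m by simp
  qed
  define b0 where "b0 = (LEAST b. 1 \<le> b \<and> b \<le> n \<and> \<not> flat ((j + n - b) mod n))"
  have b0: "1 \<le> b0" "b0 \<le> n" "\<not> flat ((j + n - b0) mod n)"
    unfolding b0_def using LeastI_ex[OF exb] by auto
  have b0m: "\<And>e. 1 \<le> e \<Longrightarrow> e < b0 \<Longrightarrow> flat ((j + n - e) mod n)"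
  proof -
    fix e assume e: "1 \<le> e" "e < b0"
    have "\<not> (1 \<le> e \<and> e \<le> n \<and> \<not> flat ((j + n - e) mod n))"
      using not_less_Least[of e "\<lambda>b. 1 \<le> b \<and> b \<le> n \<and> \<not> flat ((j + n - b) mod n)"] e b0_def by blast
    then show "flat ((j + n - e) mod n)" using e b0 by auto
  qed
  have bwd: "e < b0 \<Longrightarrow> P ((j + n - e) mod n) \<in> C" for e
  proof (induction e)
    case 0 then show ?case using j by simp
  next
    case (Suc e)
    then have IH: "P ((j + n - e) mod n) \<in> C" by simp
    define k where "k = (j + n - Suc e) mod n"
    have fk: "flat k" using b0m[of "Suc e"] Suc k_def by simp
    have "(k + 1) mod n = (j + n - Suc e + 1) mod n" unfolding k_def by (simp add: mod_Suc_eq)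
    also have "j + n - Suc e + 1 = j + n - e" using Suc b0 by simp
    finally have "P ((k + 1) mod n) \<in> C" using IH by simp
    then have "P k \<in> C" using flat_step[OF im _ fk] k_def npos by simp
    then show ?case using k_def by simp
  qed
  define a where "a = (j + n - b0) mod n"
  have alt: "a < n" using a_def npos by simp
  have "(a + 1) mod n = (j + n - b0 + 1) mod n" unfolding a_def by (simp add: mod_Suc_eq)
  also have "j + n - b0 + 1 = j + n - (b0 - 1)" using b0 by simp
  finally have aC: "P ((a + 1) mod n) \<in> C" using bwd[of "b0 - 1"] b0 by simp
  have "\<not> down a"
  proof
    assume "down a"
    have "g ((real a + 1) / real n) \<in> C" using aC Psucc[OF alt] by simp
    then show False using bump[OF im alt, of 1] \<open>down a\<close> unfolding down_def by simp
  qed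
  then have ua: "up a" using b0(3) a_def unfolding flat_def up_def down_def by auto
  have ia: "i = (a + (b0 + f0)) mod n"
  proof -
    have "(a + (b0 + f0)) mod n = (j + n - b0 + (b0 + f0)) mod n" unfolding a_def by (simp add: mod_add_left_eq)
    also have "j + n - b0 + (b0 + f0) = (j + f0) + n" using b0 by simp
    finally show ?thesis using i_def by simp
  qed
  have btw: "\<forall>e. 0 < e \<longrightarrow> e < b0 + f0 \<longrightarrow> flat ((a + e) mod n)"
  proof (intro allI impI)
    fix e assume e: "0 < e" "e < b0 + f0"
    have ae: "(a + e) mod n = (j + n - b0 + e) mod n" unfolding a_def by (simp add: mod_add_left_eq)
    show "flat ((a + e) mod n)"
    proof (cases "e < b0")
      case True
      have "j + n - b0 + e = j + n - (b0 - e)" using True b0 by simp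
      then show ?thesis using ae b0m[of "b0 - e"] True e by simp
    next
      case False
      have "j + n - b0 + e = (j + (e - b0)) + n" using False b0 by simp
      then have "(a + e) mod n = (j + (e - b0)) mod n" using ae by simp
      then show ?thesis using f0(2)[of "e - b0"] False e by simp
    qed
  qed
  have "0 < b0 + f0" using b0 by simp
  then have "Dp i" unfolding Dp_def using alt ua ia btw
    by (intro exI[of _ a] exI[of _ "b0 + f0"]) simp
  then have "i \<in> D" unfolding D_def using ilt di by blast
  then show ?thesis using iC by blast
qed

lemma t_decomp:
  assumes t: "t \<in> {0..1}"
  shows "\<exists>k s. k < n \<and> 0 \<le> s \<and> s \<le> 1 \<and> t = (real k + s) / real n"
proof (cases "t = 1")
  case True
  have "real (n - 1) + 1 = real n" using n3 by (simp add: of_nat_diff)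
  then have "t = (real (n - 1) + 1) / real n" using True npos by simp
  then show ?thesis using n3 by (intro exI[of _ "n - 1"] exI[of _ 1]) auto
next
  case False
  define k where "k = nat \<lfloor>t * real n\<rfloor>"
  define s where "s = t * real n - real k"
  have tn: "0 \<le> t * real n" "t * real n < real n" using t False npos by auto
  have kk: "real k = of_int \<lfloor>t * real n\<rfloor>" unfolding k_def using tn by simp
  have s: "0 \<le> s" "s < 1" unfolding s_def kk by linarith+
  have k: "k < n" using tn kk by linarith
  have tt: "t = (real k + s) / real n" unfolding s_def using npos by simp
  show ?thesis using k s tt by (intro exI[of _ k] exI[of _ s]) auto
qed

lemma LM_eq: "local_max_sets KK p = {C. \<exists>c U. ismax C c U}"
  unfolding local_max_sets_def ismax_def by blast

lemma result: "finite (local_max_sets KK p) \<and> 2 * card (local_max_sets KK p) + 1 \<le> n"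
proof (cases "\<forall>m<n. flat m")
  case True
  have Hc: "k < n \<Longrightarrow> H k = H 0" for k
  proof (induction k)
    case 0 then show ?case by simp
  next
    case (Suc k)
    then have "flat k" using True by simp
    then show ?case using Suc unfolding flat_def by simp
  qed
  have allh: "x \<in> KK \<Longrightarrow> p \<bullet> x = H 0" for x
  proof -
    assume "x \<in> KK"
    then obtain t where t: "t \<in> {0..1}" "x = g t" unfolding KK_def by blast
    obtain k s where ks: "k < n" "0 \<le> s" "s \<le> 1" "t = (real k + s) / real n"
      using t_decomp[OF t(1)] by blast
    have "(k + 1) mod n < n" using npos by simp
    then show ?thesis using hgt[OF ks(1-3)] ks t Hc[OF ks(1)] Hc[of "(k+1) mod n"]
      by (simp add: algebra_simps)
  qed
  have conn: "connected KK" unfolding KK_def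
    by (rule connected_continuous_image) (use cont in auto)
  have ne: "KK \<noteq> {}" unfolding KK_def by auto
  have sub: "local_max_sets KK p \<subseteq> {KK}"
  proof
    fix C assume "C \<in> local_max_sets KK p"
    then obtain c U where im: "ismax C c U" using LM_eq by blast
    have comp: "C \<in> components (KK \<inter> {x. p \<bullet> x = c})" using im ismax_def by blast
    obtain x where x: "x \<in> C" using comp in_components_nonempty by blast
    have xk: "x \<in> KK \<and> p \<bullet> x = c" using ismax_level[OF im x] .
    have "c = H 0" using allh[of x] xk by simp
    then have "KK \<inter> {x. p \<bullet> x = c} = KK" using allh by blast
    then have "C \<in> components KK" using comp by simp
    then show "C \<in> {KK}" using components_eq_sing_iff conn ne by blast
  qed
  have "finite (local_max_sets KK p)" using sub finite_subset by blast
  moreover have "card (local_max_sets KK p) \<le> 1" using card_mono[OF _ sub] by simp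
  ultimately show ?thesis using n3 by simp
next
  case False
  then have nf: "\<exists>m<n. \<not> flat m" by blast
  have ex: "\<exists>i. i \<in> D \<and> P i \<in> C" if "C \<in> local_max_sets KK p" for C
  proof -
    have "C \<in> {C. \<exists>c U. ismax C c U}" using that LM_eq by simp
    then obtain c U where im: "ismax C c U" by blast
    obtain j where "j < n" "P j \<in> C" using vertex_in[OF im] by blast
    then show ?thesis using walk[OF im _ _ nf] by blast
  qed
  define be where "be C = (SOME i. i \<in> D \<and> P i \<in> C)" for C
  have be: "be C \<in> D \<and> P (be C) \<in> C" if "C \<in> local_max_sets KK p" for C
    using someI_ex[OF ex[OF that]] be_def by simp
  have inj: "inj_on be (local_max_sets KK p)"
  proof (rule inj_onI)
    fix C1 C2 assume c: "C1 \<in> local_max_sets KK p" "C2 \<in> local_max_sets KK p" "be C1 = be C2"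
    obtain c1 U1 where im1: "ismax C1 c1 U1" using c(1) LM_eq by blast
    obtain c2 U2 where im2: "ismax C2 c2 U2" using c(2) LM_eq by blast
    have i1: "P (be C1) \<in> C1" "P (be C1) \<in> C2" using be[OF c(1)] be[OF c(2)] c(3) by auto
    have "c1 = c2" using ismax_level[OF im1 i1(1)] ismax_level[OF im2 i1(2)] by simp
    then have "C1 \<in> components (KK \<inter> {x. p \<bullet> x = c1})" "C2 \<in> components (KK \<inter> {x. p \<bullet> x = c1})"
      using im1 im2 unfolding ismax_def by auto
    then show "C1 = C2" using components_nonoverlap i1 by blast
  qed
  have Dsub: "D \<subseteq> {..<n}" using D_props(1) by blast
  have fD: "finite D" using Dsub finite_subset by blast
  have img: "be ` local_max_sets KK p \<subseteq> D" using be by blast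
  have "finite (local_max_sets KK p)" using inj_on_finite[OF inj img fD] .
  moreover have "card (local_max_sets KK p) \<le> card D" using card_inj_on_le[OF inj img fD] .
  ultimately show ?thesis using count by simp
qed

end

lemma SC:
  assumes k: "k < length vs" and s: "0 \<le> s" "s \<le> 1"
  shows "stick_curve vs ((real k + s) / real (length vs)) =
         (1 - s) *\<^sub>R vs ! k + s *\<^sub>R vs ! ((k + 1) mod length vs)"
proof -
  define n where "n = length vs"
  have npos: "real n > 0" using k unfolding n_def by auto
  have u: "(real k + s) / real n * real n = real k + s" using npos by simp
  show ?thesis
  proof (cases "s < 1")
    case True
    have fl: "\<lfloor>real k + s\<rfloor> = int k" using True s by linarith
    have "min k (n - 1) = k" using k n_def by simp
    then show ?thesis unfolding stick_curve_def Let_def n_def[symmetric] u fl by simp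
  next
    case False
    then have s1: "s = 1" using s by simp
    have fl: "\<lfloor>real k + s\<rfloor> = int (k + 1)" using s1 by simp
    show ?thesis
    proof (cases "k + 1 < n")
      case True
      then have "min (k + 1) (n - 1) = k + 1" by simp
      moreover have "nat (1 + int k) = Suc k" by arith
      ultimately show ?thesis unfolding stick_curve_def Let_def n_def[symmetric] u fl
        using s1 True by simp
    next
      case False
      then have kn: "k + 1 = n" using k n_def by simp
      then have "min (k + 1) (n - 1) = k" by simp
      moreover have "real k + s - real k = 1" using s1 by simp
      ultimately show ?thesis unfolding stick_curve_def Let_def n_def[symmetric] u fl
        using s1 kn by simp
    qed
  qed
qed

lemma poly_n3:
  assumes sp: "stick_polygon vs"
  shows "length vs \<ge> 3"
proof (rule ccontr)
  assume "\<not> length vs \<ge> 3"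
  moreover have "vs \<noteq> []" using sp stick_polygon_def by blast
  ultimately have "length vs = 1 \<or> length vs = 2" by (cases "length vs") auto
  then consider "length vs = 1" | "length vs = 2" by blast
  then show False
  proof cases
    case 1
    have "edge_vec vs 0 = 0" unfolding edge_vec_def 1 by simp
    then show False using sp 1 unfolding stick_polygon_def by auto
  next
    case 2
    have a: "stick_curve vs (1/4) = (1/2) *\<^sub>R vs ! 0 + (1/2) *\<^sub>R vs ! 1"
      using SC[of 0 vs "1/2"] 2 by simp
    have b: "stick_curve vs (3/4) = (1/2) *\<^sub>R vs ! 1 + (1/2) *\<^sub>R vs ! 0"
      using SC[of 1 vs "1/2"] 2 by simp
    have dp: "double_pair vs (1/4) (3/4)" unfolding double_pair_def using a b by simp
    have i1: "stick_edge_index vs (1/4) = 0" unfolding stick_edge_index_def 2 by simp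
    have i2: "stick_edge_index vs (3/4) = 1" unfolding stick_edge_index_def 2 by simp
    have "(let d = edge_vec vs (stick_edge_index vs (1/4)); e = edge_vec vs (stick_edge_index vs (3/4))
         in d $ 1 * e $ 2 - d $ 2 * e $ 1 \<noteq> 0)" using sp dp unfolding stick_polygon_def by blast
    then show False unfolding i1 i2 Let_def edge_vec_def 2 by (simp add: algebra_simps)
  qed
qed

lemma inner3: "(a :: real^3) \<bullet> b = a $ 1 * b $ 1 + a $ 2 * b $ 2 + a $ 3 * b $ 3"
  unfolding inner_vec_def by (simp add: sum_3)

theorem theorem2p4:
  fixes K :: "(real^3) set"
  assumes "is_knot K"
  shows "2 * bridge_index K + 1 \<le> planar_stick_index K"
  unfolding planar_stick_index_def
proof (rule INF_greatest)
  fix n assume "n \<in> {n. \<exists>vs over. length vs = n \<and> stick_polygon vs \<and> crossing_info vs over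
                          \<and> represents vs over K}"
  then obtain vs over where vs: "length vs = n" "stick_polygon vs" "represents vs over K" by blast
  obtain z where z: "simple_path (\<lambda>t. vector [stick_curve vs t $ 1, stick_curve vs t $ 2, z t] :: real^3)"
     "pathfinish (\<lambda>t. vector [stick_curve vs t $ 1, stick_curve vs t $ 2, z t] :: real^3) =
      pathstart (\<lambda>t. vector [stick_curve vs t $ 1, stick_curve vs t $ 2, z t] :: real^3)"
     "same_knot_type K (path_image (\<lambda>t. vector [stick_curve vs t $ 1, stick_curve vs t $ 2, z t] :: real^3))"
    using vs(3) unfolding represents_def Let_def by blast
  define g where "g = (\<lambda>t. vector [stick_curve vs t $ 1, stick_curve vs t $ 2, z t] :: real^3)"
  have n3: "n \<ge> 3" using poly_n3[OF vs(2)] vs(1) by simp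
  define d where "d = edge_vec vs 0"
  have d0: "d \<noteq> 0" using vs(2) n3 vs(1) unfolding stick_polygon_def d_def by auto
  have d12: "d $ 1 \<noteq> 0 \<or> d $ 2 \<noteq> 0"
    using d0 by (metis (mono_tags, lifting) exhaust_2 vec_eq_iff zero_index)
  define N where "N = sqrt ((d $ 1)^2 + (d $ 2)^2)"
  have Npos: "N > 0" unfolding N_def using d12 by (auto simp: add_pos_nonneg add_nonneg_pos)
  define p where "p = (vector [- (d $ 2) / N, d $ 1 / N, 0] :: real^3)"
  define H where "H k = (- (d $ 2) * (vs ! k) $ 1 + d $ 1 * (vs ! k) $ 2) / N" for k
  have pg: "p \<bullet> g t = (- (d $ 2) * stick_curve vs t $ 1 + d $ 1 * stick_curve vs t $ 2) / N" for t
    unfolding inner3 p_def g_def using Npos by (simp add: field_simps)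
  have hgt: "p \<bullet> g ((real k + s) / real n) = (1 - s) * H k + s * H ((k+1) mod n)"
    if "k < n" "0 \<le> s" "s \<le> 1" for k s
  proof -
    have sc: "stick_curve vs ((real k + s) / real n) = (1 - s) *\<^sub>R vs ! k + s *\<^sub>R vs ! ((k + 1) mod n)"
      using SC[of k vs s] that vs(1) by simp
    have c1: "stick_curve vs ((real k + s) / real n) $ 1 = (1 - s) * (vs ! k) $ 1 + s * (vs ! ((k + 1) mod n)) $ 1"
      unfolding sc by simp
    have c2: "stick_curve vs ((real k + s) / real n) $ 2 = (1 - s) * (vs ! k) $ 2 + s * (vs ! ((k + 1) mod n)) $ 2"
      unfolding sc by simp
    show ?thesis unfolding pg H_def c1 c2 using Npos by (simp add: field_simps)
  qed
  have flat0: "H (1 mod n) = H 0"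
  proof -
    have m1: "1 mod n = 1" using n3 by (intro mod_less) simp
    have "d = vs ! 1 - vs ! 0" unfolding d_def edge_vec_def vs(1) using m1 by simp
    then have e: "(vs ! 1) $ 1 = d $ 1 + (vs ! 0) $ 1" "(vs ! 1) $ 2 = d $ 2 + (vs ! 0) $ 2"
      by simp_all
    have "- (d $ 2) * (vs ! 1) $ 1 + d $ 1 * (vs ! 1) $ 2 = - (d $ 2) * (vs ! 0) $ 1 + d $ 1 * (vs ! 0) $ 2"
      unfolding e by (simp add: algebra_simps)
    then show ?thesis unfolding H_def m1 by simp
  qed
  have cont: "continuous_on {0..1} g" using z(1) unfolding g_def simple_path_def path_def by blast
  have loop: "g 1 = g 0" using z(2) unfolding g_def pathfinish_def pathstart_def by simp
  interpret pl g p H n using n3 cont loop hgt flat0 by unfold_locales auto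
  have res: "finite (local_max_sets KK p)" "2 * card (local_max_sets KK p) + 1 \<le> n"
    using result by auto
  have KK: "KK = path_image g" unfolding KK_def path_image_def by simp
  have pn: "p \<in> sphere 0 1"
  proof -
    have "p \<bullet> p = ((d $ 2)^2 + (d $ 1)^2) / N^2" unfolding inner3 p_def
      by (simp add: power2_eq_square add_divide_distrib)
    also have "\<dots> = 1" unfolding N_def using Npos N_def d12 by (simp add: add.commute)
    finally show ?thesis by (simp add: norm_eq_sqrt_inner)
  qed
  have sk: "same_knot_type K (path_image g)" using z(3) g_def by simp
  have A: "path_image g \<in> {K'. same_knot_type K K'}" using sk by simp
  have B: "(INF q\<in>sphere 0 1. br (path_image g) q) \<le> br (path_image g) p" by (rule INF_lower[OF pn])
  have "bridge_index K \<le> br (path_image g) p"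
    unfolding bridge_index_def
    by (rule INF_lower2[where f="\<lambda>K'. INF q\<in>sphere 0 1. br K' q", OF A B])
  also have "br (path_image g) p = enat (card (local_max_sets KK p))"
    unfolding br_def KK using res(1) KK by simp
  finally have bi: "bridge_index K \<le> enat (card (local_max_sets KK p))" .
  have "2 * bridge_index K + 1 \<le> 2 * enat (card (local_max_sets KK p)) + 1"
    using bi by (intro add_right_mono mult_left_mono) auto
  also have "\<dots> = enat (2 * card (local_max_sets KK p) + 1)" by (simp add: one_enat_def numeral_eq_enat)
  also have "\<dots> \<le> enat n" using res(2) by simp
  finally show "2 * bridge_index K + 1 \<le> enat n" .
qed

end
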